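(* Preferred semantics is serialisable with the selection function $\alpha_{adm}(X,Y,Z)=X\cup Y\cup Z$ and the termination function $\beta_{pr}(F,S)=1$ if $\mathrm{IS}(F)=\emptyset$ and $\beta_{pr}(F,S)=0$ otherwise.
   Context: An abstract argumentation framework (AF) is a pair $F=(A,R)$ with $A$ a finite subset of a fixed universal set of arguments $\mathfrak{A}$ and $R\subseteq A\times A$ ($a\to b$ means $(a,b)\in R$). For $S\subseteq A$: $S^+=\{a\mid \exists b\in S: b\to a\}$, $S^-=\{a\mid\exists b\in S: a\to b\}$; for sets $S,S'$, $S\to S'$ means $S^+\cap S'\neq\emptyset$. $S$ is admissible if it is conflict-free and every attacker of an element of $S$ is attacked by some element of $S$. A preferred extension is an inclusion-maximal admissible set. An initial set is a non-empty admissible set with no non-empty admissible proper subset; $\mathrm{IS}(F)$ is the set of initial sets. An initial set $S$ is unattacked if $S^-=\emptyset$; unchallenged if $S^-\neq\emptyset$ and no $S'\in\mathrm{IS}(F)$ has $S'\to S$; challenged if some $S'\in\mathrm{IS}(F)$ has $S'\to S$. Write $\mathrm{IS}^{u}(F),\mathrm{IS}^{uc}(F),\mathrm{IS}^{c}(F)$ for these sets. The reduct is $F^S=(A',R\cap(A'\times A'))$ with $A'=A\setminus(S\cup S^+)$. A selection function $\alpha$ maps any three sets $X,Y,Z$ of sets of arguments to a subset of $X\cup Y\cup Z$; a termination function $\beta$ maps pairs $(F,S)$ to $\{0,1\}$. Transitions: $(F,S)\to(F^{S'},S\cup S')$ whenever $S'\in\alpha(\mathrm{IS}^u(F),\mathrm{IS}^{uc}(F),\mathrm{IS}^c(F))$.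 $(F,S)\leadsto^{\alpha,\beta}(F',S')$ means $(F',S')$ is reachable from $(F,S)$ in finitely many (possibly zero) transitions and $\beta(F',S')=1$. $\mathcal{E}^{\alpha,\beta}(F)$ is the set of all $S$ with $(F,\emptyset)\leadsto^{\alpha,\beta}(F',S)$ for some $F'$. A semantics $\sigma$ is serialisable with $\alpha,\beta$ if $\sigma(F)=\mathcal{E}^{\alpha,\beta}(F)$ for all AFs $F$. *)

theory Defs
  imports Main
begin

type_synonym 'a af = "'a set \<times> ('a \<times> 'a) set"

definition wf_af :: "'a af \<Rightarrow> bool" where
  "wf_af F \<longleftrightarrow> finite (fst F) \<and> snd F \<subseteq> fst F \<times> fst F"

definition args :: "'a af \<Rightarrow> 'a set" where "args F = fst F"
definition atts :: "'a af \<Rightarrow> ('a \<times> 'a) set" where "atts F = snd F"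

definition attacked_by :: "'a af \<Rightarrow> 'a set \<Rightarrow> 'a set" where
  "attacked_by F S = {a. \<exists>b\<in>S. (b, a) \<in> atts F}"

definition attackers_of :: "'a af \<Rightarrow> 'a set \<Rightarrow> 'a set" where
  "attackers_of F S = {a. \<exists>b\<in>S. (a, b) \<in> atts F}"

definition set_attacks :: "'a af \<Rightarrow> 'a set \<Rightarrow> 'a set \<Rightarrow> bool" where
  "set_attacks F S S' \<longleftrightarrow> attacked_by F S \<inter> S' \<noteq> {}"

definition conflict_free :: "'a af \<Rightarrow> 'a set \<Rightarrow> bool" where
  "conflict_free F S \<longleftrightarrow> (\<forall>a\<in>S. \<forall>b\<in>S. (a, b) \<notin> atts F)"

definition admissible :: "'a af \<Rightarrow> 'a set \<Rightarrow> bool" where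
  "admissible F S \<longleftrightarrow> S \<subseteq> args F \<and> conflict_free F S \<and>
     (\<forall>a\<in>S. \<forall>b. (b, a) \<in> atts F \<longrightarrow> (\<exists>c\<in>S. (c, b) \<in> atts F))"

definition preferred :: "'a af \<Rightarrow> 'a set set" where
  "preferred F = {S. admissible F S \<and> (\<forall>T. admissible F T \<and> S \<subseteq> T \<longrightarrow> T = S)}"

definition initial_sets :: "'a af \<Rightarrow> 'a set set" where
  "initial_sets F = {S. S \<noteq> {} \<and> admissible F S \<and>
       (\<forall>T. T \<subset> S \<and> T \<noteq> {} \<longrightarrow> \<not> admissible F T)}"

definition IS_u :: "'a af \<Rightarrow> 'a set set" where
  "IS_u F = {S \<in> initial_sets F. attackers_of F S = {}}"

definition IS_uc :: "'a af \<Rightarrow> 'a set set" where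
  "IS_uc F = {S \<in> initial_sets F. attackers_of F S \<noteq> {} \<and>
       \<not> (\<exists>S'\<in>initial_sets F. set_attacks F S' S)}"

definition IS_c :: "'a af \<Rightarrow> 'a set set" where
  "IS_c F = {S \<in> initial_sets F. \<exists>S'\<in>initial_sets F. set_attacks F S' S}"

definition reduct :: "'a af \<Rightarrow> 'a set \<Rightarrow> 'a af" where
  "reduct F S = (let A' = args F - (S \<union> attacked_by F S)
                 in (A', atts F \<inter> (A' \<times> A')))"

(* Selection function: maps three sets of sets of arguments to a subset of their union.
   Termination function: AF and set to bool, True encodes 1. *)

type_synonym 'a selfun = "'a set set \<Rightarrow> 'a set set \<Rightarrow> 'a set set \<Rightarrow> 'a set set"
type_synonym 'a termfun = "'a af \<Rightarrow> 'a set \<Rightarrow> bool"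

definition is_selection :: "'a selfun \<Rightarrow> bool" where
  "is_selection \<alpha> \<longleftrightarrow> (\<forall>X Y Z. \<alpha> X Y Z \<subseteq> X \<union> Y \<union> Z)"

definition trans_step :: "'a selfun \<Rightarrow> ('a af \<times> 'a set) \<Rightarrow> ('a af \<times> 'a set) \<Rightarrow> bool" where
  "trans_step \<alpha> st st' \<longleftrightarrow> (\<exists>S'. S' \<in> \<alpha> (IS_u (fst st)) (IS_uc (fst st)) (IS_c (fst st)) \<and>
        st' = (reduct (fst st) S', snd st \<union> S'))"

definition leadsto :: "'a selfun \<Rightarrow> 'a termfun \<Rightarrow> ('a af \<times> 'a set) \<Rightarrow> ('a af \<times> 'a set) \<Rightarrow> bool" where
  "leadsto \<alpha> \<beta> st st' \<longleftrightarrow> (trans_step \<alpha>)\<^sup>*\<^sup>* st st' \<and> \<beta> (fst st') (snd st')"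

definition serial_ext :: "'a selfun \<Rightarrow> 'a termfun \<Rightarrow> 'a af \<Rightarrow> 'a set set" where
  "serial_ext \<alpha> \<beta> F = {S. \<exists>F'. leadsto \<alpha> \<beta> (F, {}) (F', S)}"

definition serialisable :: "('a af \<Rightarrow> 'a set set) \<Rightarrow> 'a selfun \<Rightarrow> 'a termfun \<Rightarrow> bool" where
  "serialisable \<sigma> \<alpha> \<beta> \<longleftrightarrow> (\<forall>F. wf_af F \<longrightarrow> \<sigma> F = serial_ext \<alpha> \<beta> F)"

definition alpha_adm :: "'a selfun" where
  "alpha_adm X Y Z = X \<union> Y \<union> Z"

definition beta_pr :: "'a termfun" where
  "beta_pr F S \<longleftrightarrow> initial_sets F = {}"

end

theory Submission
  imports Defs
begin

lemma reduct_args: "args (reduct F S) = args F - (S \<union> attacked_by F S)"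
  by (simp add: reduct_def args_def Let_def)

lemma reduct_atts: "atts (reduct F S) = atts F \<inter> (args (reduct F S) \<times> args (reduct F S))"
  by (simp add: reduct_def args_def atts_def Let_def)

lemma reduct_empty: "wf_af F \<Longrightarrow> reduct F {} = F"
  by (cases F) (auto simp: reduct_def wf_af_def args_def atts_def attacked_by_def)

lemma reduct_reduct:
  assumes "T \<subseteq> args (reduct F S)"
  shows "reduct (reduct F S) T = reduct F (S \<union> T)"
proof -
  have eq: "args (reduct (reduct F S) T) = args (reduct F (S \<union> T))"
  proof
    show "args (reduct (reduct F S) T) \<subseteq> args (reduct F (S \<union> T))"
    proof
      fix x assume "x \<in> args (reduct (reduct F S) T)"
      then have x1: "x \<in> args (reduct F S)" "x \<notin> T" "x \<notin> attacked_by (reduct F S) T"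
        by (simp_all add: reduct_args)
      have "x \<notin> attacked_by F T"
      proof
        assume "x \<in> attacked_by F T"
        then obtain b where "b \<in> T" "(b, x) \<in> atts F" by (auto simp: attacked_by_def)
        then have "(b, x) \<in> atts (reduct F S)" using x1(1) assms reduct_atts by blast
        then show False using x1(3) \<open>b \<in> T\<close> by (auto simp: attacked_by_def)
      qed
      then show "x \<in> args (reduct F (S \<union> T))" using x1
        by (auto simp: reduct_args attacked_by_def)
    qed
  next
    show "args (reduct F (S \<union> T)) \<subseteq> args (reduct (reduct F S) T)"
    proof
      fix x assume x: "x \<in> args (reduct F (S \<union> T))"
      have "attacked_by (reduct F S) T \<subseteq> attacked_by F T"
        by (auto simp: attacked_by_def reduct_atts)
      moreover have "x \<in> args (reduct F S)" using x by (auto simp: reduct_args attacked_by_def)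
      moreover have "x \<notin> T" "x \<notin> attacked_by F T" using x by (auto simp: reduct_args attacked_by_def)
      ultimately show "x \<in> args (reduct (reduct F S) T)" by (auto simp: reduct_args)
    qed
  qed
  have subs: "args (reduct (reduct F S) T) \<subseteq> args (reduct F S)"
    by (auto simp: reduct_args)
  have "atts (reduct (reduct F S) T) = atts (reduct F (S \<union> T))"
  proof -
    have "atts (reduct (reduct F S) T) = atts (reduct F S) \<inter> (args (reduct (reduct F S) T) \<times> args (reduct (reduct F S) T))"
      by (rule reduct_atts)
    also have "\<dots> = atts F \<inter> (args (reduct (reduct F S) T) \<times> args (reduct (reduct F S) T))"
      using subs by (subst reduct_atts) blast
    also have "\<dots> = atts (reduct F (S \<union> T))"
      using eq reduct_atts by metis
    finally show ?thesis .
  qed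
  with eq show ?thesis
    by (metis args_def atts_def prod.collapse)
qed

lemma adm_union:
  assumes wf: "wf_af F" and S: "admissible F S" and S': "admissible (reduct F S) S'"
  shows "admissible F (S \<union> S')"
proof -
  have R: "atts F \<subseteq> args F \<times> args F" using wf by (simp add: wf_af_def args_def atts_def)
  have S'A: "S' \<subseteq> args (reduct F S)" using S' by (simp add: admissible_def)
  show ?thesis
    unfolding admissible_def
  proof (intro conjI)
    show "S \<union> S' \<subseteq> args F" using S S'A by (auto simp: admissible_def reduct_args)
    show "conflict_free F (S \<union> S')"
      unfolding conflict_free_def
    proof (intro ballI)
      fix a b assume a: "a \<in> S \<union> S'" and b: "b \<in> S \<union> S'"
      show "(a, b) \<notin> atts F"
      proof
        assume ab: "(a, b) \<in> atts F"
        show False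
        proof (cases "a \<in> S")
          case True
          then show False
          proof (cases "b \<in> S")
            case True with \<open>a \<in> S\<close> ab S show False by (auto simp: admissible_def conflict_free_def)
          next
            case False
            then have "b \<in> S'" using b by auto
            with S'A True ab show False by (auto simp: reduct_args attacked_by_def)
          qed
        next
          case False
          then have aS': "a \<in> S'" using a by auto
          show False
          proof (cases "b \<in> S")
            case True
            have "\<forall>a\<in>S. \<forall>b. (b, a) \<in> atts F \<longrightarrow> (\<exists>c\<in>S. (c, b) \<in> atts F)"
              using S by (simp add: admissible_def)
            then have "\<exists>c\<in>S. (c, a) \<in> atts F" using ab True by blast
            then obtain c where "c \<in> S" "(c, a) \<in> atts F" by blast
            with aS' S'A show False by (auto simp: reduct_args attacked_by_def)
          next
            case False
            then have "b \<in> S'" using b by auto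
            have cf: "conflict_free (reduct F S) S'" using S' by (simp add: admissible_def)
            have "(a, b) \<in> atts (reduct F S)"
              using aS' \<open>b \<in> S'\<close> ab S'A reduct_atts[of F S] by blast
            then show False using cf aS' \<open>b \<in> S'\<close> unfolding conflict_free_def by blast
          qed
        qed
      qed
    qed
    show "\<forall>a\<in>S \<union> S'. \<forall>b. (b, a) \<in> atts F \<longrightarrow> (\<exists>c\<in>S \<union> S'. (c, b) \<in> atts F)"
    proof (intro ballI allI impI)
      fix a b assume a: "a \<in> S \<union> S'" and ba: "(b, a) \<in> atts F"
      show "\<exists>c\<in>S \<union> S'. (c, b) \<in> atts F"
      proof (cases "a \<in> S")
        case True
        have "\<forall>a\<in>S. \<forall>b. (b, a) \<in> atts F \<longrightarrow> (\<exists>c\<in>S. (c, b) \<in> atts F)"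
          using S by (simp add: admissible_def)
        then show ?thesis using True ba by blast
      next
        case False
        then have aS': "a \<in> S'" using a by auto
        have bA: "b \<in> args F" using R ba by auto
        show ?thesis
        proof (cases "b \<in> S \<union> attacked_by F S")
          case True
          then show ?thesis
          proof
            assume "b \<in> S"
            then have "a \<in> attacked_by F S" using ba by (auto simp: attacked_by_def)
            with aS' S'A show ?thesis by (auto simp: reduct_args)
          next
            assume "b \<in> attacked_by F S"
            then show ?thesis by (auto simp: attacked_by_def)
          qed
        next
          case False
          then have "b \<in> args (reduct F S)" using bA by (auto simp: reduct_args)
          then have "(b, a) \<in> atts (reduct F S)" using ba aS' S'A by (auto simp: reduct_atts)
          moreover have "\<forall>a\<in>S'. \<forall>b. (b, a) \<in> atts (reduct F S) \<longrightarrow> (\<exists>c\<in>S'. (c, b) \<in> atts (reduct F S))"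
            using S' by (simp add: admissible_def)
          ultimately obtain c where "c \<in> S'" "(c, b) \<in> atts (reduct F S)"
            using aS' by blast
          then show ?thesis by (auto simp: reduct_atts)
        qed
      qed
    qed
  qed
qed

lemma adm_diff:
  assumes S: "admissible F S" and E: "admissible F E" and SE: "S \<subseteq> E"
  shows "admissible (reduct F S) (E - S)"
proof -
  have sub: "E - S \<subseteq> args (reduct F S)"
    using S E SE by (auto simp: admissible_def conflict_free_def reduct_args attacked_by_def)
  show ?thesis
    unfolding admissible_def
  proof (intro conjI ballI allI impI)
    show "E - S \<subseteq> args (reduct F S)" by (rule sub)
    show "conflict_free (reduct F S) (E - S)"
      using E by (auto simp: admissible_def conflict_free_def reduct_atts)
    fix a b assume a: "a \<in> E - S" and ba: "(b, a) \<in> atts (reduct F S)"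
    then have "(b, a) \<in> atts F" and bA: "b \<in> args (reduct F S)" by (auto simp: reduct_atts)
    then have "\<exists>c\<in>E. (c, b) \<in> atts F" using E a unfolding admissible_def by blast
    then obtain c where c: "c \<in> E" "(c, b) \<in> atts F" by blast
    have "c \<notin> S" using c bA by (auto simp: reduct_args attacked_by_def)
    then have "c \<in> args (reduct F S)" using sub c by auto
    then show "\<exists>c\<in>E - S. (c, b) \<in> atts (reduct F S)"
      using c bA \<open>c \<notin> S\<close> by (auto simp: reduct_atts)
  qed
qed

lemma contains_initial:
  "finite S \<Longrightarrow> S \<noteq> {} \<Longrightarrow> admissible G S \<Longrightarrow> \<exists>T\<subseteq>S. T \<in> initial_sets G"
proof (induction S rule: finite_psubset_induct)
  case (psubset S)
  show ?case
  proof (cases "S \<in> initial_sets G")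
    case True then show ?thesis by blast
  next
    case False
    then obtain T where "T \<subset> S" "T \<noteq> {}" "admissible G T"
      using psubset.prems by (auto simp: initial_sets_def)
    with psubset.IH[of T] show ?thesis by blast
  qed
qed

lemma alpha_all: "alpha_adm (IS_u G) (IS_uc G) (IS_c G) = initial_sets G"
  by (auto simp: alpha_adm_def IS_u_def IS_uc_def IS_c_def)

lemma invariant:
  assumes "(trans_step alpha_adm)\<^sup>*\<^sup>* (F, {}) st" and wf: "wf_af F"
  shows "fst st = reduct F (snd st) \<and> admissible F (snd st)"
  using assms(1)
proof (induction rule: rtranclp_induct)
  case base
  then show ?case using reduct_empty[OF wf]
    by (simp add: admissible_def conflict_free_def)
next
  case (step y z)
  then obtain S' where S': "S' \<in> initial_sets (fst y)" and z: "z = (reduct (fst y) S', snd y \<union> S')"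
    by (auto simp: trans_step_def alpha_all)
  have adm': "admissible (reduct F (snd y)) S'" using S' step.IH by (simp add: initial_sets_def)
  then have "S' \<subseteq> args (reduct F (snd y))" by (simp add: admissible_def)
  then show ?case using z step.IH adm_union[OF wf _ adm'] reduct_reduct[of S' F "snd y"] by auto
qed

lemma args_finite: "wf_af F \<Longrightarrow> finite (args F)"
  by (simp add: wf_af_def args_def)

lemma finite_reduct: "wf_af F \<Longrightarrow> finite (args (reduct F S))"
  using args_finite[of F] by (simp add: reduct_args)

theorem theorem6:
  shows "serialisable (preferred :: 'a af \<Rightarrow> 'a set set) alpha_adm beta_pr"
  unfolding serialisable_def
proof (intro allI impI)
  fix F :: "'a af" assume wf: "wf_af F"
  show "preferred F = serial_ext alpha_adm beta_pr F"
  proof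
    show "serial_ext alpha_adm beta_pr F \<subseteq> preferred F"
    proof
      fix S assume "S \<in> serial_ext alpha_adm beta_pr F"
      then obtain F' where r: "(trans_step alpha_adm)\<^sup>*\<^sup>* (F, {}) (F', S)"
        and b: "initial_sets F' = {}"
        by (auto simp: serial_ext_def leadsto_def beta_pr_def)
      from invariant[OF r wf] have F': "F' = reduct F S" and adm: "admissible F S" by auto
      have "\<forall>T. admissible F T \<and> S \<subseteq> T \<longrightarrow> T = S"
      proof (intro allI impI)
        fix T assume T: "admissible F T \<and> S \<subseteq> T"
        show "T = S"
        proof (rule ccontr)
          assume "T \<noteq> S"
          then have ne: "T - S \<noteq> {}" using T by auto
          have a: "admissible (reduct F S) (T - S)" using adm_diff adm T by blast
          then have "finite (T - S)"
            using finite_reduct[OF wf] by (meson admissible_def finite_subset)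
          then show False using contains_initial[OF _ ne a] b F' by auto
        qed
      qed
      then show "S \<in> preferred F" using adm by (simp add: preferred_def)
    qed
  next
    show "preferred F \<subseteq> serial_ext alpha_adm beta_pr F"
    proof
      fix E assume E: "E \<in> preferred F"
      then have admE: "admissible F E" by (simp add: preferred_def)
      have finE: "finite E" using admE args_finite[OF wf] by (meson admissible_def finite_subset)
      have main: "\<And>S. S \<subseteq> E \<Longrightarrow> (trans_step alpha_adm)\<^sup>*\<^sup>* (F, {}) (reduct F S, S) \<Longrightarrow>
                 E \<in> serial_ext alpha_adm beta_pr F"
      proof -
        fix S0 show "S0 \<subseteq> E \<Longrightarrow> (trans_step alpha_adm)\<^sup>*\<^sup>* (F, {}) (reduct F S0, S0) \<Longrightarrow>
                 E \<in> serial_ext alpha_adm beta_pr F"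
        proof (induction "card (E - S0)" arbitrary: S0 rule: less_induct)
          case less
          have admS: "admissible F S0" using invariant[OF less.prems(2) wf] by simp
          show ?case
          proof (cases "S0 = E")
            case True
            have "initial_sets (reduct F E) = {}"
            proof (rule ccontr)
              assume "initial_sets (reduct F E) \<noteq> {}"
              then obtain T where T: "T \<in> initial_sets (reduct F E)" by auto
              then have Ta: "admissible (reduct F E) T" "T \<noteq> {}" by (auto simp: initial_sets_def)
              then have "admissible F (E \<union> T)" using adm_union[OF wf admE] by blast
              then have "E \<union> T = E" using E by (auto simp: preferred_def)
              moreover have "T \<inter> E = {}" using Ta by (auto simp: admissible_def reduct_args)
              ultimately show False using Ta by auto
            qed
            then show ?thesis using less.prems True
              unfolding serial_ext_def leadsto_def beta_pr_def
              by (intro CollectI exI[of _ "reduct F E"]) simp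
          next
            case False
            then have ne: "E - S0 \<noteq> {}" using less.prems by auto
            have a: "admissible (reduct F S0) (E - S0)" using adm_diff admS admE less.prems by blast
            obtain T where T: "T \<subseteq> E - S0" "T \<in> initial_sets (reduct F S0)"
              using contains_initial[OF _ ne a] finE by auto
            have Tne: "T \<noteq> {}" and Ta: "T \<subseteq> args (reduct F S0)"
              using T by (auto simp: initial_sets_def admissible_def)
            have step: "trans_step alpha_adm (reduct F S0, S0) (reduct F (S0 \<union> T), S0 \<union> T)"
              unfolding trans_step_def alpha_all using T reduct_reduct[OF Ta] by auto
            have r: "(trans_step alpha_adm)\<^sup>*\<^sup>* (F, {}) (reduct F (S0 \<union> T), S0 \<union> T)"
              using less.prems(2) step by (rule rtranclp.rtrancl_into_rtrancl)
            have cl: "card (E - (S0 \<union> T)) < card (E - S0)"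
              using T Tne finE by (intro psubset_card_mono) auto
            have sub: "S0 \<union> T \<subseteq> E" using T less.prems(1) by auto
            show ?thesis by (rule less.hyps[OF cl sub r])
          qed
        qed
      qed
      show "E \<in> serial_ext alpha_adm beta_pr F"
        by (rule main[of "{}"]) (simp_all add: reduct_empty[OF wf])
    qed
  qed
qed

end
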